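(* Let $\mathcal{G}=\langle\mathbb{V},\mathbb{E}\rangle$ be as in the context, let $e:\mathbb{E}\to\{1,\dots,|\mathbb{E}|\}$ be a bijection, and let $\mathcal{F}$ be a feedback arc set of $\mathcal{G}$. Then there exists an $\mathcal{H}^{(|\mathbb{V}|\cdot(|\mathbb{E}|+1)+|\mathcal{F}|)}$-partition of $\mathcal{P}(\mathcal{G},e)$.
   Context: Standing assumption: $\mathcal{G}=\langle\mathbb{V},\mathbb{E}\rangle$ is a finite directed graph with $\mathbb{V}\ne\emptyset$, without self-loops, in which every vertex has in-degree $1$ or out-degree $1$; let $m=|\mathbb{E}|$. A feedback arc set of $\mathcal{G}$ is a subset of $\mathbb{E}$ meeting every directed cycle. For $v\in\mathbb{V}$ the gadget $\mathcal{N}_v=\langle\mathcal{V}_v,\mathcal{E}_v\rangle$ has vertices $\mathcal{V}_v=\{v_{i,j}:0\le i,j\le m\}$ (distinct for distinct $v$) and arcs $\mathcal{E}_v=\{\langle v_{i,j},v_{i,j+1}\rangle:0\le i\le m,0\le j<m\}\cup\{\langle v_{i,j},v_{i+1,j}\rangle:0\le i<m,0\le j\le m\}$. The digraph $\mathcal{P}(\mathcal{G},e)=\langle\mathbb{V}_{\mathcal{G}},\mathbb{E}_{\mathcal{G}}\rangle$ has vertex set $\mathbb{V}_{\mathcal{G}}=\bigcup_{v\in\mathbb{V}}\mathcal{V}_v\cup\mathbb{E}$ (each arc of $\mathcal{G}$ is also a vertex) and arc set $\mathbb{E}_{\mathcal{G}}=\bigcup_{v\in\mathbb{V}}\mathcal{E}_v\cup\{\langle\langle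 v,u\rangle,v_{e(\langle v,u\rangle),0}\rangle:\langle v,u\rangle\in\mathbb{E}\}\cup\{\langle\langle v,u\rangle,u_{0,e(\langle v,u\rangle)}\rangle:\langle v,u\rangle\in\mathbb{E}\}$; it is a DAG. For a DAG $G$, a partition $\pi$ of its vertex set is an $\mathcal{H}^{(k)}$-partition if $|\pi|=k$, every induced subgraph $G[P]$, $P\in\pi$, has a directed Hamiltonian path, and the quotient digraph $G/\pi$ (vertex set $\pi$, arc $\langle P,Q\rangle$ for $P\ne Q$ whenever some arc of $G$ goes from $P$ to $Q$) is acyclic. *)

theory Defs
  imports Main
begin

definition std_graph :: "'v set \<Rightarrow> ('v \<times> 'v) set \<Rightarrow> bool" where
  "std_graph V E \<longleftrightarrow> finite V \<and> V \<noteq> {} \<and> E \<subseteq> V \<times> V \<and> (\<forall>v. (v, v) \<notin> E) \<and>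
     (\<forall>v\<in>V. card {u. (u, v) \<in> E} = 1 \<or> card {u. (v, u) \<in> E} = 1)"

definition directed_cycle :: "('v \<times> 'v) set \<Rightarrow> 'v list \<Rightarrow> bool" where
  "directed_cycle E cs \<longleftrightarrow> cs \<noteq> [] \<and> distinct cs \<and>
     (\<forall>i < length cs. (cs ! i, cs ! ((i + 1) mod length cs)) \<in> E)"

definition cycle_arcs :: "'v list \<Rightarrow> ('v \<times> 'v) set" where
  "cycle_arcs cs = {(cs ! i, cs ! ((i + 1) mod length cs)) | i. i < length cs}"

definition feedback_arc_set :: "('v \<times> 'v) set \<Rightarrow> ('v \<times> 'v) set \<Rightarrow> bool" where
  "feedback_arc_set E F \<longleftrightarrow> F \<subseteq> E \<and>
     (\<forall>cs. directed_cycle E cs \<longrightarrow> cycle_arcs cs \<inter> F \<noteq> {})"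

text \<open>Vertices of P(G,e): gadget vertices v_{i,j} and the arcs of G themselves.\<close>
datatype 'v pvert = Gad 'v nat nat | ArcV "'v \<times> 'v"

definition P_verts :: "'v set \<Rightarrow> ('v \<times> 'v) set \<Rightarrow> 'v pvert set" where
  "P_verts V E = {Gad v i j | v i j. v \<in> V \<and> i \<le> card E \<and> j \<le> card E} \<union> ArcV ` E"

definition P_arcs :: "'v set \<Rightarrow> ('v \<times> 'v) set \<Rightarrow> ('v \<times> 'v \<Rightarrow> nat) \<Rightarrow> ('v pvert \<times> 'v pvert) set" where
  "P_arcs V E e =
     {(Gad v i j, Gad v i (j + 1)) | v i j. v \<in> V \<and> i \<le> card E \<and> j < card E}
   \<union> {(Gad v i j, Gad v (i + 1) j) | v i j. v \<in> V \<and> i < card E \<and> j \<le> card E}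
   \<union> {(ArcV (v, u), Gad v (e (v, u)) 0) | v u. (v, u) \<in> E}
   \<union> {(ArcV (v, u), Gad u 0 (e (v, u))) | v u. (v, u) \<in> E}"

definition has_ham_path :: "('a \<times> 'a) set \<Rightarrow> 'a set \<Rightarrow> bool" where
  "has_ham_path A P \<longleftrightarrow> (\<exists>ps. distinct ps \<and> set ps = P \<and>
     (\<forall>i. Suc i < length ps \<longrightarrow> (ps ! i, ps ! Suc i) \<in> A))"

definition quotient_rel :: "('a \<times> 'a) set \<Rightarrow> 'a set set \<Rightarrow> ('a set \<times> 'a set) set" where
  "quotient_rel A \<pi> = {(P, Q). P \<in> \<pi> \<and> Q \<in> \<pi> \<and> P \<noteq> Q \<and> (\<exists>x\<in>P. \<exists>y\<in>Q. (x, y) \<in> A)}"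

definition is_partition :: "'a set \<Rightarrow> 'a set set \<Rightarrow> bool" where
  "is_partition Vs \<pi> \<longleftrightarrow> (\<forall>P\<in>\<pi>. P \<noteq> {}) \<and> \<Union>\<pi> = Vs \<and>
     (\<forall>P\<in>\<pi>. \<forall>Q\<in>\<pi>. P \<noteq> Q \<longrightarrow> P \<inter> Q = {})"

definition H_partition :: "nat \<Rightarrow> 'a set \<Rightarrow> ('a \<times> 'a) set \<Rightarrow> 'a set set \<Rightarrow> bool" where
  "H_partition k Vs A \<pi> \<longleftrightarrow> is_partition Vs \<pi> \<and> card \<pi> = k \<and>
     (\<forall>P\<in>\<pi>. has_ham_path A P) \<and> acyclic (quotient_rel A \<pi>)"

end

theory Submission imports Defs begin

lemma walk_cycle:
  assumes "\<exists>f. f 0 = f n \<and> n > 0 \<and> (\<forall>i<n. (f i, f (Suc i)) \<in> R)"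
  shows "\<exists>cs. directed_cycle R cs \<and> cycle_arcs cs \<subseteq> R"
  using assms
proof (induction n rule: less_induct)
  case (less n)
  then obtain f where f0: "f 0 = f n" and n: "n > 0" and st: "\<forall>i<n. (f i, f (Suc i)) \<in> R" by blast
  show ?case
  proof (cases "distinct (map f [0..<n])")
    case True
    define cs where "cs = map f [0..<n]"
    have len: "length cs = n" by (simp add: cs_def)
    have nth: "k < n \<Longrightarrow> cs ! k = f k" for k by (simp add: cs_def)
    have arc: "(cs ! k, cs ! ((k + 1) mod length cs)) \<in> R" if "k < length cs" for k
    proof (cases "Suc k < n")
      case True
      then show ?thesis using st that len nth by simp
    next
      case False
      then have "Suc k = n" using that len by simp
      then have "(k+1) mod length cs = 0" using len by simp
      then show ?thesis using st that len nth f0 n \<open>Suc k = n\<close>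
        by (metis lessI)
    qed
    have "directed_cycle R cs" unfolding directed_cycle_def
      using True arc n len by (auto simp: cs_def)
    moreover have "cycle_arcs cs \<subseteq> R" unfolding cycle_arcs_def using arc by auto
    ultimately show ?thesis by blast
  next
    case False
    then obtain i j where ij: "i < j" "j < n" "f i = f j"
      by (auto simp: distinct_conv_nth) (metis linorder_neqE_nat)
    define g where "g k = (if k \<le> i then f k else f (k + (j - i)))" for k
    define n' where "n' = n - (j - i)"
    have "n' < n" "n' > 0" using ij by (auto simp: n'_def)
    moreover have "g 0 = g n'" using ij f0 by (auto simp: g_def n'_def)
    moreover have "\<forall>k<n'. (g k, g (Suc k)) \<in> R"
    proof (intro allI impI)
      fix k assume k: "k < n'"
      show "(g k, g (Suc k)) \<in> R"
      proof (cases "k < i")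
        case True then show ?thesis using st ij by (auto simp: g_def)
      next
        case False
        show ?thesis
        proof (cases "k = i")
          case True
          then have "g k = f j" "g (Suc k) = f (Suc j)" using ij by (auto simp: g_def)
          then show ?thesis using st ij by simp
        next
          case False
          then show ?thesis using st ij k \<open>\<not> k < i\<close> by (auto simp: g_def n'_def)
        qed
      qed
    qed
    ultimately show ?thesis using less.IH by blast
  qed
qed

lemma trancl_cycle:
  assumes "(x, x) \<in> R\<^sup>+"
  shows "\<exists>cs. directed_cycle R cs \<and> cycle_arcs cs \<subseteq> R"
proof -
  obtain n where "n > 0" "(x, x) \<in> R ^^ n" using assms trancl_power by blast
  then show ?thesis using walk_cycle[of n R] relpow_fun_conv by metis
qed


definition rowP :: "('v \<times> 'v) set \<Rightarrow> ('v \<times> 'v) set \<Rightarrow> ('v \<times> 'v \<Rightarrow> nat) \<Rightarrow> 'v \<Rightarrow> nat \<Rightarrow> 'v pvert set" where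
  "rowP E F e v i = {Gad v i j | j. j \<le> card E} \<union> {ArcV a | a. a \<in> E \<and> a \<notin> F \<and> fst a = v \<and> e a = i}"

definition piP :: "'v set \<Rightarrow> ('v \<times> 'v) set \<Rightarrow> ('v \<times> 'v) set \<Rightarrow> ('v \<times> 'v \<Rightarrow> nat) \<Rightarrow> 'v pvert set set" where
  "piP V E F e = {rowP E F e v i | v i. v \<in> V \<and> i \<le> card E} \<union> {{ArcV a} | a. a \<in> F}"

definition keyP :: "'v pvert set \<Rightarrow> ('v \<times> nat) option" where
  "keyP P = (if \<exists>p. Gad (fst p) (snd p) 0 \<in> P then Some (SOME p. Gad (fst p) (snd p) 0 \<in> P) else None)"

lemma keyP_row: "keyP (rowP E F e v i) = Some (v, i)"
proof -
  have "Gad (fst p) (snd p) 0 \<in> rowP E F e v i \<longleftrightarrow> p = (v, i)" for p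
    by (cases p) (auto simp: rowP_def)
  then show ?thesis unfolding keyP_def by auto
qed

lemma keyP_sing: "keyP {ArcV a} = None"
  unfolding keyP_def by auto

lemma Gad_in_pi:
  assumes "P \<in> piP V E F e" "Gad v i j \<in> P"
  shows "P = rowP E F e v i"
  using assms unfolding piP_def rowP_def by auto

lemma ArcV_in_pi:
  assumes "P \<in> piP V E F e" "ArcV a \<in> P" "F \<subseteq> E"
  shows "a \<in> E \<and> ((a \<in> F \<and> P = {ArcV a}) \<or> (a \<notin> F \<and> P = rowP E F e (fst a) (e a)))"
  using assms unfolding piP_def rowP_def by auto

definition TT :: "('v \<times> 'v) set \<Rightarrow> (('v \<times> nat) option \<times> ('v \<times> nat) option) set" where
  "TT R = {(None, Some x) | x. True} \<union> {(Some (v, i), Some (v, j)) | v i j. i < j}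
     \<union> {(Some (v, i), Some (u, j)) | v u i j. (v, u) \<in> R}"

lemma TT_trancl:
  assumes "(x, y) \<in> (TT R)\<^sup>+"
  shows "(x = None \<and> y \<noteq> None) \<or> (\<exists>v i u j. x = Some (v, i) \<and> y = Some (u, j) \<and> ((v, u) \<in> R\<^sup>+ \<or> (v = u \<and> i < j)))"
  using assms
proof (induction rule: trancl_induct)
  case (base y)
  then show ?case unfolding TT_def by auto
next
  case (step y z)
  from step.hyps(2) step.IH show ?case unfolding TT_def
    by (auto intro: trancl_into_trancl)
qed

lemma TT_acyclic:
  assumes "acyclic R"
  shows "acyclic (TT R)"
  unfolding acyclic_def
proof
  fix x show "(x, x) \<notin> (TT R)\<^sup>+"
    using TT_trancl[of x x R] assms unfolding acyclic_def by auto
qed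

lemma inv_image_trancl:
  assumes "(a, b) \<in> (inv_image T k)\<^sup>+"
  shows "(k a, k b) \<in> T\<^sup>+"
  using assms
  by (induction rule: trancl_induct) (auto intro: trancl_into_trancl)


theorem lemma5p6:
  fixes V :: "'v set" and E :: "('v \<times> 'v) set" and e :: "'v \<times> 'v \<Rightarrow> nat"
    and F :: "('v \<times> 'v) set"
  assumes "std_graph V E"
    and "bij_betw e E {1..card E}"
    and "feedback_arc_set E F"
  shows "\<exists>\<pi>. H_partition (card V * (card E + 1) + card F) (P_verts V E) (P_arcs V E e) \<pi>"
proof -
  define m where "m = card E"
  have finV: "finite V" and EV: "E \<subseteq> V \<times> V" using assms(1) by (auto simp: std_graph_def)
  have finE: "finite E" using finV EV finite_subset by blast
  have FE: "F \<subseteq> E" using assms(3) by (auto simp: feedback_arc_set_def)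
  have finF: "finite F" using FE finE finite_subset by blast
  have einj: "inj_on e E" using assms(2) bij_betw_def by blast
  have erng: "a \<in> E \<Longrightarrow> 1 \<le> e a \<and> e a \<le> m" for a
    using bij_betw_apply[OF assms(2)] by (auto simp: m_def)
  have acyc: "acyclic (E - F)"
  proof (rule ccontr)
    assume "\<not> acyclic (E - F)"
    then obtain x where "(x, x) \<in> (E - F)\<^sup>+" by (auto simp: acyclic_def)
    then obtain cs where cs: "directed_cycle (E - F) cs" "cycle_arcs cs \<subseteq> E - F"
      using trancl_cycle[of x "E - F"] by blast
    then have "directed_cycle E cs" by (auto simp: directed_cycle_def)
    then have "cycle_arcs cs \<inter> F \<noteq> {}" using assms(3) by (auto simp: feedback_arc_set_def)
    then show False using cs(2) by blast
  qed
  define \<pi> where "\<pi> = piP V E F e"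
  define A where "A = P_arcs V E e"
  have part: "is_partition (P_verts V E) \<pi>"
    unfolding is_partition_def
  proof (intro conjI ballI impI)
    fix P assume "P \<in> \<pi>" then show "P \<noteq> {}"
      unfolding \<pi>_def piP_def rowP_def by auto
  next
    show "\<Union> \<pi> = P_verts V E"
    proof
      show "\<Union> \<pi> \<subseteq> P_verts V E"
        unfolding \<pi>_def piP_def rowP_def P_verts_def using FE by (auto simp: m_def)
    next
      show "P_verts V E \<subseteq> \<Union> \<pi>"
      proof
        fix x assume x: "x \<in> P_verts V E"
        show "x \<in> \<Union> \<pi>"
        proof (cases x)
          case (Gad v i j)
          then have "v \<in> V" "i \<le> m" "j \<le> m" using x by (auto simp: P_verts_def m_def)
          then have "rowP E F e v i \<in> \<pi>" "x \<in> rowP E F e v i"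
            using Gad by (auto simp: \<pi>_def piP_def rowP_def m_def)
          then show ?thesis by blast
        next
          case (ArcV a)
          then have a: "a \<in> E" using x by (auto simp: P_verts_def)
          show ?thesis
          proof (cases "a \<in> F")
            case True
            then have "{ArcV a} \<in> \<pi>" unfolding \<pi>_def piP_def by blast
            then show ?thesis using ArcV by blast
          next
            case False
            have "fst a \<in> V" using a EV by auto
            have "rowP E F e (fst a) (e a) \<in> \<pi>"
              using \<open>fst a \<in> V\<close> erng[OF a] unfolding \<pi>_def piP_def m_def by blast
            moreover have "x \<in> rowP E F e (fst a) (e a)"
              using ArcV a False unfolding rowP_def by blast
            ultimately show ?thesis by blast
          qed
        qed
      qed
    qed
  next
    fix P Q assume PQ: "P \<in> \<pi>" "Q \<in> \<pi>" "P \<noteq> Q"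
    show "P \<inter> Q = {}"
    proof (rule ccontr)
      assume "P \<inter> Q \<noteq> {}"
      then obtain x where x: "x \<in> P" "x \<in> Q" by blast
      show False
      proof (cases x)
        case (Gad v i j)
        then show False using Gad_in_pi PQ x unfolding \<pi>_def by metis
      next
        case (ArcV a)
        then show False using ArcV_in_pi[OF _ _ FE] PQ x unfolding \<pi>_def by metis
      qed
    qed
  qed
  have card: "card \<pi> = card V * (card E + 1) + card F"
  proof -
    define R where "R = (\<lambda>(v, i). rowP E F e v i) ` (V \<times> {..m})"
    define S where "S = (\<lambda>a. {ArcV a}) ` F"
    have pi_eq: "\<pi> = R \<union> S" unfolding \<pi>_def piP_def R_def S_def m_def by auto
    have injR: "inj_on (\<lambda>(v, i). rowP E F e v i) (V \<times> {..m})"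
    proof (rule inj_onI)
      fix p q assume "p \<in> V \<times> {..m}" "q \<in> V \<times> {..m}"
        "(\<lambda>(v, i). rowP E F e v i) p = (\<lambda>(v, i). rowP E F e v i) q"
      then have "keyP ((\<lambda>(v, i). rowP E F e v i) p) = keyP ((\<lambda>(v, i). rowP E F e v i) q)" by simp
      then show "p = q" by (cases p, cases q) (simp add: keyP_row)
    qed
    have cR: "card R = card V * (card E + 1)"
      unfolding R_def using card_image[OF injR] finV by (simp add: card_cartesian_product m_def)
    have cS: "card S = card F" unfolding S_def by (rule card_image) (auto simp: inj_on_def)
    have disj: "R \<inter> S = {}" unfolding R_def S_def rowP_def by auto
    have "finite R" "finite S" using finV finF by (auto simp: R_def S_def)
    then show ?thesis using pi_eq cR cS disj card_Un_disjoint by metis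
  qed
  have ham: "\<forall>P\<in>\<pi>. has_ham_path A P"
  proof
    fix P assume "P \<in> \<pi>"
    then consider (row) v i where "v \<in> V" "i \<le> m" "P = rowP E F e v i"
      | (sing) a where "a \<in> F" "P = {ArcV a}"
      unfolding \<pi>_def piP_def m_def by auto
    then show "has_ham_path A P"
    proof cases
      case sing
      then show ?thesis unfolding has_ham_path_def by (intro exI[of _ "[ArcV a]"]) auto
    next
      case row
      define gs where "gs = map (\<lambda>j. Gad v i j) [0..<Suc m]"
      have gss: "set gs = {Gad v i j | j. j \<le> m}"
        unfolding gs_def set_map set_upt by auto
      have gsd: "distinct gs" by (auto simp: gs_def distinct_map inj_on_def)
      have gse: "(gs ! k, gs ! Suc k) \<in> A" if k: "Suc k < length gs" for k
      proof -
        have "k < m" using k by (simp add: gs_def)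
        then have "gs ! k = Gad v i k" "gs ! Suc k = Gad v i (k + 1)"
          by (simp_all add: gs_def del: upt_Suc)
        moreover have "(Gad v i k, Gad v i (k + 1)) \<in> A"
          using row \<open>k < m\<close> unfolding A_def P_arcs_def m_def by blast
        ultimately show ?thesis by simp
      qed
      show ?thesis
      proof (cases "\<exists>a. a \<in> E \<and> a \<notin> F \<and> fst a = v \<and> e a = i")
        case False
        have "set gs = P" using row False gss unfolding rowP_def m_def by auto
        then show ?thesis unfolding has_ham_path_def using gsd gse by blast
      next
        case True
        then obtain a where a: "a \<in> E" "a \<notin> F" "fst a = v" "e a = i" by blast
        have uniq: "b \<in> E \<Longrightarrow> e b = i \<Longrightarrow> b = a" for b using einj a by (metis inj_on_def)
        define ps where "ps = ArcV a # gs"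
        have aset: "{ArcV b | b. b \<in> E \<and> b \<notin> F \<and> fst b = v \<and> e b = i} = {ArcV a}"
          using a uniq by blast
        have "set ps = P" unfolding row(3) rowP_def aset m_def[symmetric] ps_def
          using gss by simp
        moreover have "distinct ps" using gsd gss by (auto simp: ps_def)
        moreover have "\<forall>k. Suc k < length ps \<longrightarrow> (ps ! k, ps ! Suc k) \<in> A"
        proof (intro allI impI)
          fix k assume k: "Suc k < length ps"
          show "(ps ! k, ps ! Suc k) \<in> A"
          proof (cases k)
            case 0
            obtain u where au: "a = (v, u)" using a by (cases a) auto
            have "ps ! k = ArcV (v, u)" "ps ! Suc k = Gad v (e (v, u)) 0"
              using 0 au a by (auto simp: ps_def gs_def simp del: upt_Suc)
            then show ?thesis using a au unfolding A_def P_arcs_def by auto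
          next
            case (Suc k')
            then show ?thesis using gse k by (auto simp: ps_def)
          qed
        qed
        ultimately show ?thesis unfolding has_ham_path_def by blast
      qed
    qed
  qed
  have qsub: "quotient_rel A \<pi> \<subseteq> inv_image (TT (E - F)) keyP"
  proof
    fix z assume "z \<in> quotient_rel A \<pi>"
    then obtain P Q x y where z: "z = (P, Q)" and PQ: "P \<in> \<pi>" "Q \<in> \<pi>" "P \<noteq> Q"
      and xy: "x \<in> P" "y \<in> Q" "(x, y) \<in> A"
      unfolding quotient_rel_def by auto
    have PQ': "P \<in> piP V E F e" "Q \<in> piP V E F e" using PQ by (auto simp: \<pi>_def)
    from xy(3) consider
        (r) v i j where "x = Gad v i j" "y = Gad v i (j + 1)"
      | (d) v i j where "x = Gad v i j" "y = Gad v (i + 1) j"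
      | (a1) v u where "(v, u) \<in> E" "x = ArcV (v, u)" "y = Gad v (e (v, u)) 0"
      | (a2) v u where "(v, u) \<in> E" "x = ArcV (v, u)" "y = Gad u 0 (e (v, u))"
      unfolding A_def P_arcs_def by blast
    then show "z \<in> inv_image (TT (E - F)) keyP"
    proof cases
      case r
      then show ?thesis using Gad_in_pi[OF PQ'(1)] Gad_in_pi[OF PQ'(2)] xy PQ(3) by metis
    next
      case d
      then have "P = rowP E F e v i" "Q = rowP E F e v (i + 1)"
        using Gad_in_pi[OF PQ'(1)] Gad_in_pi[OF PQ'(2)] xy by metis+
      then show ?thesis using z by (auto simp: keyP_row TT_def)
    next
      case a1
      then have Q: "Q = rowP E F e v (e (v, u))" using Gad_in_pi[OF PQ'(2)] xy by metis
      have "((v, u) \<in> F \<and> P = {ArcV (v, u)}) \<or> ((v, u) \<notin> F \<and> P = rowP E F e v (e (v, u)))"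
        using ArcV_in_pi[OF PQ'(1) _ FE, of "(v, u)"] a1 xy by simp
      then show ?thesis using Q PQ(3) z by (auto simp: keyP_row keyP_sing TT_def)
    next
      case a2
      then have Q: "Q = rowP E F e u 0" using Gad_in_pi[OF PQ'(2)] xy by metis
      have "((v, u) \<in> F \<and> P = {ArcV (v, u)}) \<or> ((v, u) \<notin> F \<and> P = rowP E F e v (e (v, u)))"
        using ArcV_in_pi[OF PQ'(1) _ FE, of "(v, u)"] a2 xy by simp
      then show ?thesis using Q z a2 by (auto simp: keyP_row keyP_sing TT_def)
    qed
  qed
  have qacyc: "acyclic (quotient_rel A \<pi>)"
  proof -
    have "acyclic (inv_image (TT (E - F)) keyP)"
      unfolding acyclic_def
    proof
      fix P show "(P, P) \<notin> (inv_image (TT (E - F)) keyP)\<^sup>+"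
        using inv_image_trancl[of P P] TT_acyclic[OF acyc] unfolding acyclic_def by blast
    qed
    then show ?thesis using qsub acyclic_subset by blast
  qed
  have "H_partition (card V * (card E + 1) + card F) (P_verts V E) A \<pi>"
    unfolding H_partition_def using part card ham qacyc by blast
  then show ?thesis unfolding A_def by blast
qed

end
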